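(* Let $pu$, $uv$, and $vq$ be three edges of a Euclidean minimum spanning tree of a finite point set in the plane such that $p$ and $q$ lie on the same side of the line through $u$ and $v$. Let $\alpha=\angle puv$ and $\gamma=\angle uvq$ denote the convex angles at $u$ and $v$, respectively. Then $\alpha+\gamma\geqslant 150^\circ$.
   Context: Angles are measured in degrees. *)

theory Defs
  imports "HOL-Analysis.Analysis"
begin

type_synonym point = "real ^ 2"

definition vangle_deg :: "point \<Rightarrow> point \<Rightarrow> real" where
  "vangle_deg x y = arccos ((x \<bullet> y) / (norm x * norm y)) * 180 / pi"

definition angle_deg :: "point \<Rightarrow> point \<Rightarrow> point \<Rightarrow> real" where
  "angle_deg a b c = vangle_deg (a - b) (c - b)"

definition orient :: "point \<Rightarrow> point \<Rightarrow> point \<Rightarrow> real" where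
  "orient a b c = (b$1 - a$1) * (c$2 - a$2) - (b$2 - a$2) * (c$1 - a$1)"

definition same_side :: "point \<Rightarrow> point \<Rightarrow> point \<Rightarrow> point \<Rightarrow> bool" where
  "same_side u v p q \<longleftrightarrow> orient u v p * orient u v q > 0"

definition edge_rel :: "point set set \<Rightarrow> (point \<times> point) set" where
  "edge_rel T = {(a, b). {a, b} \<in> T}"

definition is_spanning_tree :: "point set \<Rightarrow> point set set \<Rightarrow> bool" where
  "is_spanning_tree P T \<longleftrightarrow>
     T \<subseteq> {{a, b} | a b. a \<in> P \<and> b \<in> P \<and> a \<noteq> b} \<and>
     (\<forall>a\<in>P. \<forall>b\<in>P. (a, b) \<in> (edge_rel T)\<^sup>*) \<and>
     card T = card P - 1"

definition tree_length :: "point set set \<Rightarrow> real" where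
  "tree_length T = (\<Sum>e\<in>T. (THE d. \<exists>a b. e = {a, b} \<and> d = dist a b))"

definition is_EMST :: "point set \<Rightarrow> point set set \<Rightarrow> bool" where
  "is_EMST P T \<longleftrightarrow> is_spanning_tree P T \<and>
     (\<forall>T'. is_spanning_tree P T' \<longrightarrow> tree_length T \<le> tree_length T')"

end

theory Submission
  imports Defs
begin

lemma quad_convex:
  fixes t0 t t1 B C :: real
  assumes "t0 \<le> t" "t \<le> t1" "t0^2 + B*t0 + C < 0" "t1^2 + B*t1 + C < 0"
  shows "t^2 + B*t + C < 0"
proof (cases "t1 = t0")
  case True then show ?thesis using assms by auto
next
  case False
  then have d: "t1 - t0 > 0" using assms by auto
  have id: "(t1 - t0) * (t^2 + B*t + C) = (t1 - t) * (t0^2 + B*t0 + C) + (t - t0) * (t1^2 + B*t1 + C) - (t1-t0)*(t-t0)*(t1-t)"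
    by (simp add: algebra_simps power2_eq_square)
  have a1: "(t1 - t) * (t0^2 + B*t0 + C) \<le> 0" using assms by (simp add: mult_nonneg_nonpos)
  have a2: "(t - t0) * (t1^2 + B*t1 + C) \<le> 0" using assms by (simp add: mult_nonneg_nonpos)
  have a3: "(t1-t0)*(t-t0)*(t1-t) \<ge> 0" using assms by simp
  have "(t1 - t) * (t0^2 + B*t0 + C) + (t - t0) * (t1^2 + B*t1 + C) < 0"
  proof (cases "t = t1")
    case True then show ?thesis using d assms by (simp add: mult_pos_neg)
  next
    case False then have "t1 - t > 0" using assms by simp
    then have "(t1 - t) * (t0^2 + B*t0 + C) < 0" using assms by (simp add: mult_pos_neg)
    then show ?thesis using a2 by linarith
  qed
  then have "(t1 - t0) * (t^2 + B*t + C) < 0" using id a3 by linarith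
  then show ?thesis using d by (simp add: mult_less_0_iff)
qed

lemma trigD: "cos \<alpha> * (1 - 2*(cos \<gamma>)^2) + 2 * cos \<gamma> * sin \<alpha> * sin \<gamma> = cos (\<alpha> + 2*\<gamma> - pi)"
proof -
  have "cos (\<alpha> + 2*\<gamma> - pi) = -(cos \<alpha> * cos (2*\<gamma>) - sin \<alpha> * sin (2*\<gamma>))"
    by (simp add: cos_diff cos_add)
  also have "cos (2*\<gamma>) = 2*(cos \<gamma>)^2 - 1" by (rule cos_double_cos)
  also have "sin (2*\<gamma>) = 2 * sin \<gamma> * cos \<gamma>" by (rule sin_double)
  finally show ?thesis by (simp add: algebra_simps)
qed
lemma trigC: "sin \<alpha> * sin \<gamma> - cos \<alpha> * cos \<gamma> = cos (pi - (\<alpha> + \<gamma>))"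
    by (simp add: cos_add cos_diff)

lemma sq3_expand: "(sqrt 3/2 + k*l)^2 = 3/4 + sqrt 3 * k * l + k^2*l^2" for k l :: real
proof -
  have "(sqrt 3/2)^2 = 3/4" by (simp add: power_divide)
  then show ?thesis by (simp add: power2_sum power_mult_distrib)
qed
lemma kl_bound: "(k+l)^2 \<le> 1/4 \<Longrightarrow> 3/4 + 2*k*l + k^2*l^2 \<le> (1 - k^2)*(1-l^2)" for k l :: real
proof -
  assume h: "(k+l)^2 \<le> 1/4"
  have "(1 - k^2)*(1-l^2) = 1 - k^2 - l^2 + k^2*l^2" by (simp add: algebra_simps)
  moreover have "(k+l)^2 = k^2 + 2*k*l + l^2" by (simp add: power2_sum)
  ultimately show ?thesis using h by linarith
qed

lemma core1:
  fixes a c k m1 l m2 :: real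
  assumes apos: "a > 0" and cpos: "c > 0" and ks: "k^2 + m1^2 = 1" and ls: "l^2 + m2^2 = 1"
    and m1p: "m1 > 0" and m2p: "m2 > 0" and ca: "c \<le> a"
    and h1: "2*a*k \<le> 1" and h2: "2*k \<le> a" and h3: "2*l \<le> c" and h4: "2*c*l \<le> 1"
    and h5: "(1 - c*l - a*k)^2 + (c*m2 - a*m1)^2 \<ge> 1"
    and h6: "(1 - c*l - a*k)^2 + (c*m2 - a*m1)^2 \<ge> a^2"
  shows "arccos k + arccos l \<ge> 5*pi/6"
proof (rule ccontr)
  assume neg: "\<not> ?thesis"
  define \<alpha> where "\<alpha> = arccos k"
  define \<gamma> where "\<gamma> = arccos l"
  have "k^2 \<le> 1" using ks zero_le_power2[of m1] by linarith
  then have "\<bar>k\<bar> \<le> 1" by (simp add: abs_square_le_1)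
  then have kb: "-1 \<le> k" "k \<le> 1" by auto
  have "l^2 \<le> 1" using ls zero_le_power2[of m2] by linarith
  then have "\<bar>l\<bar> \<le> 1" by (simp add: abs_square_le_1)
  then have lb: "-1 \<le> l" "l \<le> 1" by auto
  have kc: "k = cos \<alpha>" using kb by (simp add: \<alpha>_def)
  have lc: "l = cos \<gamma>" using lb by (simp add: \<gamma>_def)
  have m1s: "m1 = sin \<alpha>"
  proof -
    have "sin \<alpha> = sqrt (1 - k^2)" using kb by (simp add: \<alpha>_def sin_arccos)
    also have "1 - k^2 = m1^2" using ks by simp
    finally show ?thesis using m1p by simp
  qed
  have m2s: "m2 = sin \<gamma>"
  proof -
    have "sin \<gamma> = sqrt (1 - l^2)" using lb by (simp add: \<gamma>_def sin_arccos)
    also have "1 - l^2 = m2^2" using ls by simp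
    finally show ?thesis using m2p by simp
  qed
  have k12: "k \<le> 1/2"
  proof (rule ccontr)
    assume "\<not> k \<le> 1/2"
    then have "k > 1/2" by simp
    then have "a > 1" using h2 by simp
    then have "2*a*k > 2*k" using \<open>k > 1/2\<close> by simp
    then show False using h1 \<open>k > 1/2\<close> by linarith
  qed
  have l12: "l \<le> 1/2"
  proof (rule ccontr)
    assume "\<not> l \<le> 1/2"
    then have "l > 1/2" by simp
    then have "c > 1" using h3 by simp
    then have "2*c*l > 2*l" using \<open>l > 1/2\<close> by simp
    then show False using h4 \<open>l > 1/2\<close> by linarith
  qed
  have a60: "\<alpha> \<ge> pi/3" unfolding \<alpha>_def using arccos_le_arccos[of k "1/2"] kb k12 arccos_one_half by simp
  have g60: "\<gamma> \<ge> pi/3" unfolding \<gamma>_def using arccos_le_arccos[of l "1/2"] lb l12 arccos_one_half by simp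
  have sum: "\<alpha> + \<gamma> < 5*pi/6" using neg by (simp add: \<alpha>_def \<gamma>_def)
  have a90: "\<alpha> < pi/2" using sum g60 by simp
  have g90: "\<gamma> < pi/2" using sum a60 by simp
  have kpos: "k > 0" using kc a90 a60 by (simp add: cos_gt_zero)
  have lpos: "l > 0" using lc g90 g60 by (simp add: cos_gt_zero)
  define ct where "ct = m1*m2 - k*l"
  have ct_eq: "ct = cos (pi - (\<alpha> + \<gamma>))"
    unfolding ct_def kc lc m1s m2s by (rule trigC)
  have ct12: "ct \<ge> 1/2"
  proof -
    have "cos (pi - (\<alpha> + \<gamma>)) \<ge> cos (pi/3)"
      by (rule cos_monotone_0_pi_le) (use sum a60 g60 in auto)
    then show ?thesis using ct_eq cos_60 by simp
  qed
  have cm150: "cos (pi - (\<alpha> + \<gamma>)) < cos (pi/6)"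
    by (rule cos_monotone_0_pi) (use sum a60 g60 a90 g90 in auto)
  have ct30: "ct < sqrt 3 / 2" using cm150 ct_eq cos_30 by simp
  have kl: "k + l > 1/2"
  proof (rule ccontr)
    assume "\<not> k + l > 1/2"
    then have t: "k + l \<le> 1/2" by simp
    have e1: "m1^2 = 1 - k^2" using ks by simp
    have e2: "m2^2 = 1 - l^2" using ls by simp
    have "(sqrt 3/2 + k*l)^2 = 3/4 + sqrt 3 * k * l + k^2*l^2"
      by (rule sq3_expand)
    also have "\<dots> \<le> 3/4 + 2*k*l + k^2*l^2"
    proof -
      have "sqrt 3 \<le> sqrt (2^2)" by (rule real_sqrt_le_mono) simp
      then have s32: "sqrt 3 \<le> 2" by simp
      have "sqrt 3 * (k * l) \<le> 2 * (k*l)" using kpos lpos s32 by (intro mult_right_mono) auto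
      then show ?thesis by (simp add: mult.assoc)
    qed
    also have "\<dots> \<le> (1 - k^2)*(1-l^2)"
    proof -
      have "(k+l)^2 \<le> (1/2)^2" using t kpos lpos by (intro power_mono) auto
      then have "(k+l)^2 \<le> 1/4" by (simp add: power2_eq_square)
      then show ?thesis by (rule kl_bound)
    qed
    also have "\<dots> = (m1*m2)^2" by (simp add: power_mult_distrib e1 e2)
    finally have "(sqrt 3/2 + k*l)^2 \<le> (m1*m2)^2" .
    moreover have "0 \<le> m1*m2" using m1p m2p by simp
    ultimately have "sqrt 3/2 + k*l \<le> m1*m2" by (rule power2_le_imp_le)
    then show False using ct30 ct_def by simp
  qed
  define D where "D = k*(1 - 2*l^2) + 2*l*m1*m2"
  have D_eq: "D = cos (\<alpha> + 2*\<gamma> - pi)"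
    unfolding D_def kc lc m1s m2s by (rule trigD)
  have D12: "D > 1/2"
  proof -
    have "cos (\<alpha> + 2*\<gamma> - pi) > cos (pi/3)"
      by (rule cos_monotone_0_pi) (use sum a60 g60 a90 g90 in auto)
    then show ?thesis using D_eq cos_60 by simp
  qed
  define r2 where "r2 = max 1 (a^2)"
  define B where "B = 2*(-l*(1 - a*k) - a*m1*m2)"
  define C where "C = (1 - a*k)^2 + a^2*m1^2 - r2"
  have gform: "(1 - t*l - a*k)^2 + (t*m2 - a*m1)^2 - r2 = t^2 + B*t + C" for t
  proof -
    have "(1 - t*l - a*k)^2 + (t*m2 - a*m1)^2 = t^2*(l^2+m2^2) + B*t + (1 - a*k)^2 + a^2*m1^2"
      by (simp add: B_def power2_eq_square algebra_simps)
    then show ?thesis using ls by (simp add: C_def)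
  qed
  have gc: "c^2 + B*c + C \<ge> 0" using gform[of c] h5 h6 by (simp add: r2_def)
  have g0: "(2*l)^2 + B*(2*l) + C < 0"
  proof -
    have "(1 - (2*l)*l - a*k)^2 + ((2*l)*m2 - a*m1)^2 = 1 + a^2*(k^2+m1^2) - 2*a*D + 4*l^2*(l^2+m2^2 - 1)"
      by (simp add: D_def power2_eq_square algebra_simps)
    also have "\<dots> = 1 + a^2 - 2*a*D" using ks ls by simp
    finally have e: "(1 - (2*l)*l - a*k)^2 + ((2*l)*m2 - a*m1)^2 = 1 + a^2 - 2*a*D" .
    have "1 + a^2 - 2*a*D < r2"
    proof (cases "a \<ge> 1")
      case True
      have "a * 1 < a * (2*D)" using D12 apos by (intro mult_strict_left_mono) auto
      then have "2*a*D > a" by simp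
      moreover have "r2 = a^2" using True one_le_power[of a 2] by (simp add: r2_def max_def)
      ultimately show ?thesis using True by linarith
    next
      case False
      have "a * a < a * (2*D)" using D12 apos False by (intro mult_strict_left_mono) auto
      then have "a^2 < 2*a*D" by (simp add: power2_eq_square)
      moreover have "a^2 \<le> 1" using False apos by (simp add: power_le_one)
      then have "r2 = 1" by (simp add: r2_def max_def)
      ultimately show ?thesis by linarith
    qed
    then show ?thesis using gform[of "2*l"] e by simp
  qed
  have g1: "a^2 + B*a + C < 0"
  proof -
    have "(1 - a*l - a*k)^2 + (a*m2 - a*m1)^2 = 1 - 2*a*(k+l) + a^2*((k^2+m1^2) + (l^2+m2^2)) - 2*a^2*ct"
      by (simp add: ct_def power2_eq_square algebra_simps)
    also have "\<dots> = 1 - 2*a*(k+l) + 2*a^2*(1 - ct)" using ks ls by (simp add: algebra_simps)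
    finally have e: "(1 - a*l - a*k)^2 + (a*m2 - a*m1)^2 = 1 - 2*a*(k+l) + 2*a^2*(1 - ct)" .
    have "1 - 2*a*(k+l) + 2*a^2*(1 - ct) < r2"
    proof (cases "a \<ge> 1")
      case True
      have "a * 1 < a * (2*(k+l))" using kl apos by (intro mult_strict_left_mono) auto
      then have x1: "2*a*(k+l) > a" by (simp add: algebra_simps)
      have x2: "a^2*(1 - 2*ct) \<le> 0" using ct12 by (simp add: mult_nonneg_nonpos)
      have "1 - 2*a*(k+l) + 2*a^2*(1 - ct) = a^2 + (1 - 2*a*(k+l)) + a^2*(1 - 2*ct)" by (simp add: algebra_simps)
      moreover have "r2 = a^2" using True one_le_power[of a 2] by (simp add: r2_def max_def)
      ultimately show ?thesis using True x1 x2 by linarith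
    next
      case False
      have "a*(1 - ct) \<le> a * (1/2)" using ct12 apos by simp
      also have "\<dots> < k + l" using False kl by simp
      finally have "(2*a)*(a*(1 - ct)) < (2*a)*(k+l)" using apos by (intro mult_strict_left_mono) auto
      then have "2*a^2*(1 - ct) < 2*a*(k+l)" by (simp add: power2_eq_square algebra_simps)
      moreover have "a^2 \<le> 1" using False apos by (simp add: power_le_one)
      then have "r2 = 1" by (simp add: r2_def max_def)
      ultimately show ?thesis by linarith
    qed
    then show ?thesis using gform[of a] e by simp
  qed
  have "c^2 + B*c + C < 0" by (rule quad_convex[OF h3 ca g0 g1])
  then show False using gc by simp
qed

lemma core:
  fixes a c k m1 l m2 :: real
  assumes apos: "a > 0" and cpos: "c > 0" and ks: "k^2 + m1^2 = 1" and ls: "l^2 + m2^2 = 1"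
    and m1p: "m1 > 0" and m2p: "m2 > 0"
    and h1: "2*a*k \<le> 1" and h2: "2*k \<le> a" and h3: "2*l \<le> c" and h4: "2*c*l \<le> 1"
    and h5: "(1 - c*l - a*k)^2 + (c*m2 - a*m1)^2 \<ge> 1"
    and h6: "(1 - c*l - a*k)^2 + (c*m2 - a*m1)^2 \<ge> a^2"
    and h7: "(1 - c*l - a*k)^2 + (c*m2 - a*m1)^2 \<ge> c^2"
  shows "arccos k + arccos l \<ge> 5*pi/6"
proof (cases "c \<le> a")
  case True
  show ?thesis by (rule core1[OF apos cpos ks ls m1p m2p True h1 h2 h3 h4 h5 h6])
next
  case False
  have e: "(1 - a*k - c*l)^2 + (a*m1 - c*m2)^2 = (1 - c*l - a*k)^2 + (c*m2 - a*m1)^2"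
    by (simp add: power2_eq_square algebra_simps)
  have "arccos l + arccos k \<ge> 5*pi/6"
    by (rule core1[OF cpos apos ls ks m2p m1p _ h4 h3 h2 h1]) (use False h5 h7 e in auto)
  then show ?thesis by simp
qed
lemma core2:
  fixes e1 e2 x1 y1 x2 y2 :: real
  assumes cr: "(e1*y1 - e2*x1) * (e1*y2 - e2*x2) > 0"
    and d1: "x1^2+y1^2 \<le> (x1-e1)^2+(y1-e2)^2"
    and d2: "x1^2+y1^2 \<le> (e1+x2-x1)^2+(e2+y2-y1)^2"
    and d3: "e1^2+e2^2 \<le> (x1-e1)^2+(y1-e2)^2"
    and d4: "e1^2+e2^2 \<le> (e1+x2)^2+(e2+y2)^2"
    and d5: "e1^2+e2^2 \<le> (e1+x2-x1)^2+(e2+y2-y1)^2"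
    and d6: "x2^2+y2^2 \<le> (e1+x2)^2+(e2+y2)^2"
    and d7: "x2^2+y2^2 \<le> (e1+x2-x1)^2+(e2+y2-y1)^2"
  shows "arccos ((x1*e1+y1*e2)/(sqrt(x1^2+y1^2)* sqrt(e1^2+e2^2)))
       + arccos ((-(x2*e1+y2*e2))/(sqrt(x2^2+y2^2)* sqrt(e1^2+e2^2))) \<ge> 5*pi/6"
proof -
  define a where "a = sqrt(x1^2+y1^2)"
  define b where "b = sqrt(e1^2+e2^2)"
  define c where "c = sqrt(x2^2+y2^2)"
  define dt1 where "dt1 = x1*e1+y1*e2"
  define dt2 where "dt2 = x2*e1+y2*e2"
  define cr1 where "cr1 = e1*y1 - e2*x1"
  define cr2 where "cr2 = e1*y2 - e2*x2"
  define W where "W = (e1+x2-x1)^2+(e2+y2-y1)^2"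
  define \<sigma> where "\<sigma> = (if cr1 > 0 then 1 else -1::real)"
  have cr12: "cr1 * cr2 > 0" using cr by (simp add: cr1_def cr2_def)
  have sp1: "\<sigma> * cr1 > 0" and sp2: "\<sigma> * cr2 > 0" and ss: "\<sigma>*\<sigma> = 1"
    using cr12 by (auto simp: \<sigma>_def zero_less_mult_iff)
  have a2: "a^2 = x1^2+y1^2" and b2: "b^2 = e1^2+e2^2" and c2: "c^2 = x2^2+y2^2"
    by (simp_all add: a_def b_def c_def)
  have "x1^2+y1^2 > 0"
  proof (rule ccontr)
    assume "\<not> x1^2+y1^2 > 0"
    then have "x1^2 + y1^2 = 0" using zero_le_power2[of x1] zero_le_power2[of y1] by linarith
    then have "x1 = 0 \<and> y1 = 0" by simp
    then show False using cr12 by (simp add: cr1_def)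
  qed
  then have apos: "a > 0" by (simp add: a_def)
  have "e1^2+e2^2 > 0"
  proof (rule ccontr)
    assume "\<not> e1^2+e2^2 > 0"
    then have "e1^2 + e2^2 = 0" using zero_le_power2[of e1] zero_le_power2[of e2] by linarith
    then have "e1 = 0 \<and> e2 = 0" by simp
    then show False using cr12 by (simp add: cr1_def)
  qed
  then have bpos: "b > 0" by (simp add: b_def)
  have "x2^2+y2^2 > 0"
  proof (rule ccontr)
    assume "\<not> x2^2+y2^2 > 0"
    then have "x2^2 + y2^2 = 0" using zero_le_power2[of x2] zero_le_power2[of y2] by linarith
    then have "x2 = 0 \<and> y2 = 0" by simp
    then show False using cr12 by (simp add: cr2_def)
  qed
  then have cpos: "c > 0" by (simp add: c_def)
  have lag1: "dt1^2 + cr1^2 = a^2 * b^2" unfolding a2 b2 dt1_def cr1_def by (simp add: power2_eq_square algebra_simps)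
  have lag2: "dt2^2 + cr2^2 = c^2 * b^2" unfolding c2 b2 dt2_def cr2_def by (simp add: power2_eq_square algebra_simps)
  have lagW: "(b^2 + dt2 - dt1)^2 + (cr2 - cr1)^2 = W * b^2"
    unfolding W_def b2 dt1_def dt2_def cr1_def cr2_def by (simp add: power2_eq_square algebra_simps)
  define A where "A = a / b"
  define C where "C = c / b"
  define k where "k = dt1 / (a*b)"
  define l where "l = - dt2 / (c*b)"
  define m1 where "m1 = \<sigma> * cr1 / (a*b)"
  define m2 where "m2 = \<sigma> * cr2 / (c*b)"
  have ks: "k^2 + m1^2 = 1"
  proof -
    have "k^2 + m1^2 = (dt1^2 + (\<sigma>*\<sigma>)*cr1^2) / (a^2*b^2)"
      using apos bpos by (simp add: k_def m1_def power2_eq_square field_simps)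
    then show ?thesis using lag1 ss apos bpos by simp
  qed
  have ls: "l^2 + m2^2 = 1"
  proof -
    have "l^2 + m2^2 = (dt2^2 + (\<sigma>*\<sigma>)*cr2^2) / (c^2*b^2)"
      using cpos bpos by (simp add: l_def m2_def power2_eq_square field_simps)
    then show ?thesis using lag2 ss cpos bpos by simp
  qed
  have m1p: "m1 > 0" using sp1 apos bpos by (simp add: m1_def)
  have m2p: "m2 > 0" using sp2 cpos bpos by (simp add: m2_def)
  have Apos: "A > 0" using apos bpos by (simp add: A_def)
  have Cpos: "C > 0" using cpos bpos by (simp add: C_def)
  have Ak: "A*k = dt1 / b^2" using apos bpos by (simp add: A_def k_def power2_eq_square)
  have Cl: "C*l = - dt2 / b^2" using cpos bpos by (simp add: C_def l_def power2_eq_square)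
  have h1: "2*A*k \<le> 1"
  proof -
    have "2*dt1 \<le> b^2" using d1 unfolding b2 dt1_def by (simp add: power2_eq_square algebra_simps)
    then have "2*dt1/b^2 \<le> 1" using bpos by (simp add: divide_le_eq)
    moreover have "2*A*k = 2*dt1/b^2" using Ak by simp
    ultimately show ?thesis by simp
  qed
  have h2: "2*k \<le> A"
  proof -
    have "2*dt1 \<le> a^2" using d3 unfolding a2 dt1_def by (simp add: power2_eq_square algebra_simps)
    then show ?thesis using apos bpos by (simp add: k_def A_def field_simps power2_eq_square)
  qed
  have h3: "2*l \<le> C"
  proof -
    have "- 2*dt2 \<le> c^2" using d4 unfolding c2 dt2_def by (simp add: power2_eq_square algebra_simps)
    then show ?thesis using cpos bpos by (simp add: l_def C_def field_simps power2_eq_square)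
  qed
  have h4: "2*C*l \<le> 1"
  proof -
    have "- 2*dt2 \<le> b^2" using d6 unfolding b2 dt2_def by (simp add: power2_eq_square algebra_simps)
    then have "-2*dt2/b^2 \<le> 1" using bpos by (simp add: divide_le_eq le_divide_eq)
    moreover have "2*C*l = -2*dt2/b^2" using Cl by simp
    ultimately show ?thesis by simp
  qed
  have E: "(1 - C*l - A*k)^2 + (C*m2 - A*m1)^2 = W / b^2"
  proof -
    have e1: "1 - C*l - A*k = (b^2 + dt2 - dt1) / b^2" using Ak Cl bpos by (simp add: field_simps)
    have e2: "C*m2 - A*m1 = \<sigma> * (cr2 - cr1) / b^2" using apos bpos cpos
      by (simp add: C_def A_def m1_def m2_def field_simps power2_eq_square)
    have "(1 - C*l - A*k)^2 + (C*m2 - A*m1)^2 = ((b^2 + dt2 - dt1)^2 + (\<sigma>*\<sigma>)*(cr2 - cr1)^2) / (b^2)^2"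
      unfolding e1 e2 by (simp add: power_divide power_mult_distrib power2_eq_square add_divide_distrib)
    also have "\<dots> = W * b^2 / (b^2)^2" using lagW ss by simp
    also have "\<dots> = W / b^2" using bpos by (simp add: power2_eq_square)
    finally show ?thesis .
  qed
  have Wb: "b^2 \<le> W" using d5 b2 by (simp add: W_def)
  have Wa: "a^2 \<le> W" using d2 a2 by (simp add: W_def)
  have Wc: "c^2 \<le> W" using d7 c2 by (simp add: W_def)
  have bb: "b^2 > 0" using bpos by simp
  have h5: "(1 - C*l - A*k)^2 + (C*m2 - A*m1)^2 \<ge> 1"
    unfolding E using Wb bb by (simp add: le_divide_eq)
  have h6: "(1 - C*l - A*k)^2 + (C*m2 - A*m1)^2 \<ge> A^2"
  proof -
    have "A^2 = a^2/b^2" by (simp add: A_def power_divide)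
    then show ?thesis unfolding E using Wa bb by (simp add: divide_right_mono)
  qed
  have h7: "(1 - C*l - A*k)^2 + (C*m2 - A*m1)^2 \<ge> C^2"
  proof -
    have "C^2 = c^2/b^2" by (simp add: C_def power_divide)
    then show ?thesis unfolding E using Wc bb by (simp add: divide_right_mono)
  qed
  have "arccos k + arccos l \<ge> 5*pi/6"
    by (rule core[OF Apos Cpos ks ls m1p m2p h1 h2 h3 h4 h5 h6 h7])
  then show ?thesis by (simp add: k_def l_def dt1_def dt2_def a_def b_def c_def)
qed



lemma edge_rel_iff: "(a,b) \<in> edge_rel T \<longleftrightarrow> {a,b} \<in> T"
  by (simp add: edge_rel_def)

lemma sym_edge_rel: "sym (edge_rel T)"
  by (auto simp: sym_def edge_rel_def insert_commute)

lemma edge_rel_mono: "S \<subseteq> T \<Longrightarrow> edge_rel S \<subseteq> edge_rel T"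
  by (auto simp: edge_rel_def)

lemma conn_card:
  fixes P :: "point set" and T :: "point set set"
  assumes finT: "finite T" and conn: "\<forall>x\<in>P. \<forall>y\<in>P. (x,y) \<in> (edge_rel T)\<^sup>*" and r: "r \<in> P"
  shows "card P - 1 \<le> card T"
proof -
  let ?R = "edge_rel T"
  define d where "d x = (LEAST n. (x,r) \<in> ?R^^n)" for x
  have dR: "(x,r) \<in> ?R^^(d x)" if "(x,r) \<in> ?R^^n" for x n
    unfolding d_def by (rule LeastI[of _ n]) (rule that)
  have dle: "d x \<le> n" if "(x,r) \<in> ?R^^n" for x n
    unfolding d_def by (rule Least_le) (rule that)
  have nb: "\<exists>y. {x,y} \<in> T \<and> d y < d x" if "x \<in> P" "x \<noteq> r" for x
  proof -
    from conn that(1) r have "(x,r) \<in> ?R\<^sup>*" by blast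
    then obtain n where "(x,r) \<in> ?R^^n" using rtrancl_power by blast
    then have xr: "(x,r) \<in> ?R^^(d x)" by (rule dR)
    have "d x \<noteq> 0"
    proof
      assume "d x = 0" then show False using xr that(2) by simp
    qed
    then obtain m where m: "d x = Suc m" by (cases "d x") auto
    then obtain y where y1: "(x,y) \<in> ?R" and y2: "(y,r) \<in> ?R^^m" using xr relpow_Suc_D2 by metis
    have "{x,y} \<in> T" using y1 by (simp add: edge_rel_iff)
    moreover have "d y \<le> m" using dle y2 by blast
    ultimately show ?thesis using m by (intro exI[of _ y]) auto
  qed
  define g where "g x = (SOME y. {x,y} \<in> T \<and> d y < d x)" for x
  have gp: "{x, g x} \<in> T \<and> d (g x) < d x" if "x \<in> P - {r}" for x
    unfolding g_def by (rule someI_ex) (use nb that in auto)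
  define f where "f x = {x, g x}" for x
  have inj: "inj_on f (P - {r})"
  proof (rule inj_onI)
    fix x x' assume x: "x \<in> P - {r}" and x': "x' \<in> P - {r}" and eq: "f x = f x'"
    show "x = x'"
    proof (rule ccontr)
      assume ne: "x \<noteq> x'"
      from eq have "{x, g x} = {x', g x'}" by (simp add: f_def)
      then have "x = g x' \<and> g x = x'" using ne by (auto simp: doubleton_eq_iff)
      then show False using gp[OF x] gp[OF x'] by auto
    qed
  qed
  have img: "f ` (P - {r}) \<subseteq> T" using gp by (auto simp: f_def)
  have "card (P - {r}) \<le> card T" by (rule card_inj_on_le[OF inj img finT])
  then show ?thesis using r by (simp add: card_Diff_singleton_if)
qed

lemma conn_replace:
  assumes ab: "(a,b) \<in> (edge_rel S)\<^sup>*" and sub: "T - {{a,b}} \<subseteq> S"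
    and conn: "\<forall>x\<in>P. \<forall>y\<in>P. (x,y) \<in> (edge_rel T)\<^sup>*"
  shows "\<forall>x\<in>P. \<forall>y\<in>P. (x,y) \<in> (edge_rel S)\<^sup>*"
proof -
  have ba: "(b,a) \<in> (edge_rel S)\<^sup>*"
    using ab sym_rtrancl[OF sym_edge_rel[of S]] by (auto simp: sym_def)
  have "edge_rel T \<subseteq> (edge_rel S)\<^sup>*"
  proof
    fix z assume "z \<in> edge_rel T"
    then obtain s t where z: "z = (s,t)" and st: "{s,t} \<in> T" by (auto simp: edge_rel_def)
    show "z \<in> (edge_rel S)\<^sup>*"
    proof (cases "{s,t} = {a,b}")
      case True
      then have "(s,t) = (a,b) \<or> (s,t) = (b,a)" by (auto simp: doubleton_eq_iff)
      then show ?thesis using ab ba z by auto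
    next
      case False
      then have "{s,t} \<in> S" using st sub by auto
      then show ?thesis using z by (auto simp: edge_rel_iff)
    qed
  qed
  then have "(edge_rel T)\<^sup>* \<subseteq> (edge_rel S)\<^sup>*" by (rule rtrancl_subset_rtrancl)
  then show ?thesis using conn by blast
qed

lemma len_pair: "(THE d. \<exists>a b. {s,t} = {a,b} \<and> d = dist a b) = dist s t"
  by (rule the_equality) (auto simp: doubleton_eq_iff dist_commute)

lemma exchange:
  assumes fin: "finite P" and emst: "is_EMST P T" and ab: "{a,b} \<in> T"
    and xP: "x \<in> P" and yP: "y \<in> P"
    and ax: "(a,x) \<in> (edge_rel (T - {{a,b}}))\<^sup>*" and yb: "(y,b) \<in> (edge_rel (T - {{a,b}}))\<^sup>*"
  shows "dist a b \<le> dist x y"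
proof -
  have st: "is_spanning_tree P T" and mini: "\<And>T'. is_spanning_tree P T' \<Longrightarrow> tree_length T \<le> tree_length T'"
    using emst by (auto simp: is_EMST_def)
  have sub: "T \<subseteq> {{a, b} | a b. a \<in> P \<and> b \<in> P \<and> a \<noteq> b}"
    and conn: "\<forall>a\<in>P. \<forall>b\<in>P. (a, b) \<in> (edge_rel T)\<^sup>*" and cardT: "card T = card P - 1"
    using st by (auto simp: is_spanning_tree_def)
  have "T \<subseteq> Pow P" using sub by auto
  then have finT: "finite T" using fin by (meson finite_Pow_iff finite_subset)
  have abP: "a \<in> P" "b \<in> P" "a \<noteq> b" using sub ab by (auto simp: doubleton_eq_iff)
  have cP: "card P \<ge> 2"
  proof -
    have "card {a,b} = 2" using abP by simp
    moreover have "card {a,b} \<le> card P" using abP fin by (intro card_mono) auto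
    ultimately show ?thesis by simp
  qed
  define T0 where "T0 = T - {{a,b}}"
  have cT0: "card T0 = card T - 1" using ab finT by (simp add: T0_def card_Diff_singleton)
  have finT0: "finite T0" using finT by (simp add: T0_def)
  show ?thesis
  proof (cases "{x,y} \<in> T0 \<or> x = y")
    case True
    have xy: "(x,y) \<in> (edge_rel T0)\<^sup>*" using True by (auto simp: edge_rel_iff)
    have "(a,b) \<in> (edge_rel T0)\<^sup>*"
      using ax xy yb unfolding T0_def[symmetric] by (meson rtrancl_trans)
    then have "\<forall>x\<in>P. \<forall>y\<in>P. (x,y) \<in> (edge_rel T0)\<^sup>*"
      by (rule conn_replace) (use conn in \<open>auto simp: T0_def\<close>)
    then have "card P - 1 \<le> card T0" using conn_card[OF finT0] abP by blast
    then show ?thesis using cT0 cardT cP by simp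
  next
    case False
    define T' where "T' = insert {x,y} T0"
    have R0: "edge_rel T0 \<subseteq> edge_rel T'" by (rule edge_rel_mono) (auto simp: T'_def)
    have ax': "(a,x) \<in> (edge_rel T')\<^sup>*" using ax R0 rtrancl_mono unfolding T0_def by blast
    have yb': "(y,b) \<in> (edge_rel T')\<^sup>*" using yb R0 rtrancl_mono unfolding T0_def by blast
    have xy: "(x,y) \<in> (edge_rel T')\<^sup>*" by (auto simp: edge_rel_iff T'_def)
    have "(a,b) \<in> (edge_rel T')\<^sup>*" using ax' xy yb' by (meson rtrancl_trans)
    then have conn': "\<forall>x\<in>P. \<forall>y\<in>P. (x,y) \<in> (edge_rel T')\<^sup>*"
      by (rule conn_replace) (use conn in \<open>auto simp: T0_def T'_def\<close>)
    have sub': "T' \<subseteq> {{a, b} | a b. a \<in> P \<and> b \<in> P \<and> a \<noteq> b}"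
      using sub False xP yP by (auto simp: T'_def T0_def)
    have cT': "card T' = card T0 + 1" using False finT0 by (simp add: T'_def)
    have "is_spanning_tree P T'"
      unfolding is_spanning_tree_def using sub' conn' cT' cT0 cardT cP by simp
    then have le: "tree_length T \<le> tree_length T'" by (rule mini)
    define len where "len e = (THE d. \<exists>a b. e = {a, b} \<and> d = dist a b)" for e :: "(real^2) set"
    have "tree_length T = sum len T0 + len {a,b}"
      unfolding tree_length_def len_def[symmetric] T0_def using ab finT by (simp add: sum.remove)
    moreover have "tree_length T' = sum len T0 + len {x,y}"
      unfolding tree_length_def len_def[symmetric] T'_def using False finT0 by simp
    ultimately show ?thesis using le by (simp add: len_def len_pair)
  qed
qed

lemma dist2: "dist (x::point) y = sqrt ((x$1 - y$1)^2 + (x$2 - y$2)^2)"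
  by (simp add: dist_norm norm_eq_sqrt_inner inner_vec_def sum_2 power2_eq_square)

theorem corollary1:
  fixes P :: "point set" and T :: "point set set" and p u v q :: point
  assumes "finite P"
    and "is_EMST P T"
    and "{p, u} \<in> T" and "{u, v} \<in> T" and "{v, q} \<in> T"
    and "same_side u v p q"
  shows "angle_deg p u v + angle_deg u v q \<ge> 150"
proof -
  note fin = assms(1) and emst = assms(2) and pu = assms(3) and uv = assms(4) and vq = assms(5)
  have ss: "orient u v p * orient u v q > 0" using assms(6) by (simp add: same_side_def)
  have ne: "p \<noteq> u" "u \<noteq> v" "p \<noteq> v" "q \<noteq> u" "q \<noteq> v"
    using ss by (auto simp: orient_def)
  have sub: "T \<subseteq> {{a, b} | a b. a \<in> P \<and> b \<in> P \<and> a \<noteq> b}"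
    using emst by (auto simp: is_EMST_def is_spanning_tree_def)
  have inP: "p \<in> P" "u \<in> P" "v \<in> P" "q \<in> P" using sub pu uv vq by (auto simp: doubleton_eq_iff)
  have up: "{u,p} \<in> T" using pu by (simp add: insert_commute)
  have r1: "(u,v) \<in> (edge_rel (T - {{u,p}}))\<^sup>*"
    using uv ne by (intro r_into_rtrancl) (auto simp: edge_rel_iff doubleton_eq_iff)
  have r2: "(v,q) \<in> (edge_rel (T - {{u,p}}))\<^sup>*"
    using vq ne by (intro r_into_rtrancl) (auto simp: edge_rel_iff doubleton_eq_iff)
  have D1: "dist u p \<le> dist v p" by (rule exchange[OF fin emst up inP(3) inP(1) r1]) simp
  have D2: "dist u p \<le> dist q p" by (rule exchange[OF fin emst up inP(4) inP(1)]) (use r1 r2 in \<open>auto intro: rtrancl_trans\<close>)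
  have r3: "(u,p) \<in> (edge_rel (T - {{u,v}}))\<^sup>*"
    using pu ne by (intro r_into_rtrancl) (auto simp: edge_rel_iff doubleton_eq_iff insert_commute)
  have r4: "(q,v) \<in> (edge_rel (T - {{u,v}}))\<^sup>*"
    using vq ne by (intro r_into_rtrancl) (auto simp: edge_rel_iff doubleton_eq_iff insert_commute)
  have D3: "dist u v \<le> dist p v" by (rule exchange[OF fin emst uv inP(1) inP(3) r3]) simp
  have D4: "dist u v \<le> dist u q" by (rule exchange[OF fin emst uv inP(2) inP(4) _ r4]) simp
  have D5: "dist u v \<le> dist p q" by (rule exchange[OF fin emst uv inP(1) inP(4) r3 r4])
  have r5: "(v,u) \<in> (edge_rel (T - {{v,q}}))\<^sup>*"
    using uv ne by (intro r_into_rtrancl) (auto simp: edge_rel_iff doubleton_eq_iff insert_commute)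
  have r6: "(u,p) \<in> (edge_rel (T - {{v,q}}))\<^sup>*"
    using pu ne by (intro r_into_rtrancl) (auto simp: edge_rel_iff doubleton_eq_iff insert_commute)
  have D6: "dist v q \<le> dist u q" by (rule exchange[OF fin emst vq inP(2) inP(4) r5]) simp
  have D7: "dist v q \<le> dist p q" by (rule exchange[OF fin emst vq inP(1) inP(4)]) (use r5 r6 in \<open>auto intro: rtrancl_trans\<close>)
  define e1 where "e1 = v$1 - u$1"
  define e2 where "e2 = v$2 - u$2"
  define x1 where "x1 = p$1 - u$1"
  define y1 where "y1 = p$2 - u$2"
  define x2 where "x2 = q$1 - v$1"
  define y2 where "y2 = q$2 - v$2"
  have cr: "(e1*y1 - e2*x1) * (e1*y2 - e2*x2) > 0"
  proof -
    have "orient u v p = e1*y1 - e2*x1" by (simp add: orient_def e1_def e2_def x1_def y1_def)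
    moreover have "orient u v q = e1*y2 - e2*x2" by (simp add: orient_def e1_def e2_def x2_def y2_def algebra_simps)
    ultimately show ?thesis using ss by simp
  qed
  have d1: "x1^2+y1^2 \<le> (x1-e1)^2+(y1-e2)^2"
    using D1 by (simp add: dist2 e1_def e2_def x1_def y1_def power2_eq_square algebra_simps)
  have d2: "x1^2+y1^2 \<le> (e1+x2-x1)^2+(e2+y2-y1)^2"
    using D2 by (simp add: dist2 e1_def e2_def x1_def y1_def x2_def y2_def power2_eq_square algebra_simps)
  have d3: "e1^2+e2^2 \<le> (x1-e1)^2+(y1-e2)^2"
    using D3 by (simp add: dist2 e1_def e2_def x1_def y1_def power2_eq_square algebra_simps)
  have d4: "e1^2+e2^2 \<le> (e1+x2)^2+(e2+y2)^2"
    using D4 by (simp add: dist2 e1_def e2_def x2_def y2_def power2_eq_square algebra_simps)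
  have d5: "e1^2+e2^2 \<le> (e1+x2-x1)^2+(e2+y2-y1)^2"
    using D5 by (simp add: dist2 e1_def e2_def x1_def y1_def x2_def y2_def power2_eq_square algebra_simps)
  have d6: "x2^2+y2^2 \<le> (e1+x2)^2+(e2+y2)^2"
    using D6 by (simp add: dist2 e1_def e2_def x2_def y2_def power2_eq_square algebra_simps)
  have d7: "x2^2+y2^2 \<le> (e1+x2-x1)^2+(e2+y2-y1)^2"
    using D7 by (simp add: dist2 e1_def e2_def x1_def y1_def x2_def y2_def power2_eq_square algebra_simps)
  have main: "arccos ((x1*e1+y1*e2)/(sqrt(x1^2+y1^2) * sqrt(e1^2+e2^2)))
       + arccos ((-(x2*e1+y2*e2))/(sqrt(x2^2+y2^2) * sqrt(e1^2+e2^2))) \<ge> 5*pi/6"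
    by (rule core2[OF cr d1 d2 d3 d4 d5 d6 d7])
  have n: "norm (w::point) = sqrt ((w$1)^2 + (w$2)^2)" for w
    by (simp add: norm_eq_sqrt_inner inner_vec_def sum_2 power2_eq_square)
  have i: "inner (w::point) z = w$1 * z$1 + w$2 * z$2" for w z
    by (simp add: inner_vec_def sum_2)
  have A1: "angle_deg p u v = arccos ((x1*e1+y1*e2)/(sqrt(x1^2+y1^2) * sqrt(e1^2+e2^2))) * 180 / pi"
    by (simp add: angle_deg_def vangle_deg_def n i x1_def y1_def e1_def e2_def)
  have A2: "angle_deg u v q = arccos ((-(x2*e1+y2*e2))/(sqrt(x2^2+y2^2) * sqrt(e1^2+e2^2))) * 180 / pi"
  proof -
    have "(u$1 - v$1)^2 + (u$2 - v$2)^2 = e1^2 + e2^2" by (simp add: e1_def e2_def power2_commute)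
    then show ?thesis
      by (simp add: angle_deg_def vangle_deg_def n i x2_def y2_def e1_def e2_def algebra_simps)
  qed
  have "angle_deg p u v + angle_deg u v q = (arccos ((x1*e1+y1*e2)/(sqrt(x1^2+y1^2) * sqrt(e1^2+e2^2)))
       + arccos ((-(x2*e1+y2*e2))/(sqrt(x2^2+y2^2) * sqrt(e1^2+e2^2)))) * 180 / pi"
    unfolding A1 A2 by (simp add: algebra_simps add_divide_distrib)
  also have "\<dots> \<ge> (5*pi/6) * 180 / pi"
    using main by (intro divide_right_mono mult_right_mono) auto
  finally show ?thesis by simp
qed


end
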